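(* Let $A\ge0$ and let $c:(0,1]\times S^1\to\mathbb R^2$ be smooth with each $c(t,\cdot)$ an immersion, and let $\alpha(t,\theta)$ be a continuous lift of $\arg c_\theta(t,\theta)$. Assume there are constants $C_1,C_2,C_3,C_4$ such that for all $t\in(0,1]$ and $\theta\in S^1$: (1) $\ell(c(t,\cdot))\le C_1$; (2) $|c_t(t,\theta)|\le C_2$; (3) $\int_{S^1}|\alpha_\theta(t,\theta)|\,d\theta\le C_3$; (4) $|\kappa_{c(t)}(\theta)|\le C_4/t$. Then $$\int_0^1\Big(\int_{S^1}(1+A\kappa_{c(t)}^2)\langle c_t,n_{c(t)}\rangle^2|c_\theta|\,d\theta\Big)^{1/2}dt\le C_2\big(\sqrt{C_1}+2\sqrt{AC_3C_4}\big).$$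
   Context: $S^1=\mathbb R/2\pi\mathbb Z$, $\mathbb R^2\cong\mathbb C$. $\ell(c)=\int_{S^1}|c_\theta|d\theta$, $n_c=ic_\theta/|c_\theta|$, $\kappa_c=\det(c_\theta,c_{\theta\theta})/|c_\theta|^3$. *)

theory Defs
  imports "HOL-Analysis.Analysis"
begin

text \<open>A family of closed curves is modelled as c :: real => real => complex,
  c t theta, defined for t in (0,1] and theta in R, 2 pi-periodic in theta.\<close>

definition tdom :: "real set" where "tdom = {0<..1}"

definition Dt :: "(real \<Rightarrow> real \<Rightarrow> complex) \<Rightarrow> real \<Rightarrow> real \<Rightarrow> complex" where
  "Dt f t \<theta> = vector_derivative (\<lambda>s. f s \<theta>) (at t within tdom)"

definition Dth :: "(real \<Rightarrow> real \<Rightarrow> complex) \<Rightarrow> real \<Rightarrow> real \<Rightarrow> complex" where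
  "Dth f t \<theta> = vector_derivative (\<lambda>\<phi>. f t \<phi>) (at \<theta>)"

inductive_set pderivs :: "(real \<Rightarrow> real \<Rightarrow> complex) \<Rightarrow> (real \<Rightarrow> real \<Rightarrow> complex) set"
  for f where
  base: "f \<in> pderivs f"
| dt: "g \<in> pderivs f \<Longrightarrow> Dt g \<in> pderivs f"
| dth: "g \<in> pderivs f \<Longrightarrow> Dth g \<in> pderivs f"

definition smooth_strip :: "(real \<Rightarrow> real \<Rightarrow> complex) \<Rightarrow> bool" where
  "smooth_strip f \<longleftrightarrow> (\<forall>g \<in> pderivs f.
      continuous_on (tdom \<times> UNIV) (\<lambda>(t,\<theta>). g t \<theta>) \<and>
      (\<forall>t\<in>tdom. \<forall>\<theta>.
         ((\<lambda>s. g s \<theta>) has_vector_derivative Dt g t \<theta>) (at t within tdom) \<and>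
         ((\<lambda>\<phi>. g t \<phi>) has_vector_derivative Dth g t \<theta>) (at \<theta>)))"

definition curve_length :: "(real \<Rightarrow> real \<Rightarrow> complex) \<Rightarrow> real \<Rightarrow> real" where
  "curve_length c t = integral {0..2*pi} (\<lambda>\<theta>. norm (Dth c t \<theta>))"

definition unit_normal :: "(real \<Rightarrow> real \<Rightarrow> complex) \<Rightarrow> real \<Rightarrow> real \<Rightarrow> complex" where
  "unit_normal c t \<theta> = \<i> * Dth c t \<theta> / complex_of_real (norm (Dth c t \<theta>))"

definition curvature :: "(real \<Rightarrow> real \<Rightarrow> complex) \<Rightarrow> real \<Rightarrow> real \<Rightarrow> real" where
  "curvature c t \<theta> =
     (Re (Dth c t \<theta>) * Im (Dth (Dth c) t \<theta>) - Im (Dth c t \<theta>) * Re (Dth (Dth c) t \<theta>))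
       / norm (Dth c t \<theta>) ^ 3"

end

theory Submission imports Defs begin

lemma lift_deriv:
  fixes u :: "real \<Rightarrow> complex" and a :: "real \<Rightarrow> real"
  assumes du: "(u has_vector_derivative u') (at \<theta>)" and nz: "u \<theta> \<noteq> 0"
    and ca: "isCont a \<theta>"
    and pol: "\<And>\<phi>. u \<phi> = of_real (norm (u \<phi>)) * cis (a \<phi>)"
  shows "(a has_real_derivative Im (u' / u \<theta>)) (at \<theta>)"
proof -
  define w where "w = (\<lambda>\<phi>. u \<phi> / u \<theta>)"
  have dw: "(w has_vector_derivative (u' / u \<theta>)) (at \<theta>)"
    unfolding w_def by (intro has_vector_derivative_divide du)
  have w1: "w \<theta> = 1" using nz by (simp add: w_def)
  have dLn: "(Ln has_field_derivative 1) (at (w \<theta>))"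
    using has_field_derivative_Ln[of 1] w1 by simp
  have "((Ln \<circ> w) has_vector_derivative (u' / u \<theta> * 1)) (at \<theta>)"
    by (rule field_vector_diff_chain_at[OF dw dLn])
  then have "((\<lambda>\<phi>. Ln (w \<phi>)) has_derivative (\<lambda>h. h *\<^sub>R (u' / u \<theta>))) (at \<theta>)"
    by (simp add: has_vector_derivative_def o_def)
  then have hIm: "((\<lambda>\<phi>. Im (Ln (w \<phi>))) has_derivative (\<lambda>h. Im (h *\<^sub>R (u' / u \<theta>)))) (at \<theta>)"
    by (rule has_derivative_Im)
  have e: "(\<lambda>h. Im (h *\<^sub>R (u' / u \<theta>))) = (*) (Im (u' / u \<theta>))" by (rule ext) simp
  have "((\<lambda>\<phi>. Im (Ln (w \<phi>))) has_real_derivative Im (u' / u \<theta>)) (at \<theta>)"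
    unfolding has_field_derivative_def using hIm unfolding e .
  from DERIV_add[OF DERIV_const this]
  have "((\<lambda>\<phi>. a \<theta> + Im (Ln (w \<phi>))) has_real_derivative Im (u' / u \<theta>)) (at \<theta>)"
    by simp
  note D = this
  have "\<exists>d>0. \<forall>\<phi>. dist \<phi> \<theta> < d \<longrightarrow> a \<theta> + Im (Ln (w \<phi>)) = a \<phi>"
  proof -
    have cu: "isCont u \<theta>" using du by (rule has_vector_derivative_continuous)
    obtain d1 where d1: "d1 > 0" "\<And>\<phi>. dist \<phi> \<theta> < d1 \<Longrightarrow> dist (a \<phi>) (a \<theta>) < pi"
      using ca unfolding continuous_at_eps_delta by (meson pi_gt_zero)
    obtain d2 where d2: "d2 > 0" "\<And>\<phi>. dist \<phi> \<theta> < d2 \<Longrightarrow> dist (u \<phi>) (u \<theta>) < norm (u \<theta>)"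
      using cu nz unfolding continuous_at_eps_delta by (meson zero_less_norm_iff)
    have "a \<theta> + Im (Ln (w \<phi>)) = a \<phi>" if "dist \<phi> \<theta> < min d1 d2" for \<phi>
    proof -
      have "u \<phi> \<noteq> 0" using d2(2)[of \<phi>] that by (auto simp: dist_norm)
      define r where "r = norm (u \<phi>) / norm (u \<theta>)"
      have r: "r > 0" using nz \<open>u \<phi> \<noteq> 0\<close> by (simp add: r_def)
      have "w \<phi> = of_real r * cis (a \<phi> - a \<theta>)"
        unfolding w_def r_def
        apply (subst pol[of \<phi>], subst pol[of \<theta>])
        using nz by (simp add: cis_divide[symmetric] field_simps)
      also have "\<dots> = exp (Complex (ln r) (a \<phi> - a \<theta>))"
        using r by (simp add: exp_eq_polar)
      finally have "Ln (w \<phi>) = Complex (ln r) (a \<phi> - a \<theta>)"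
        using d1(2)[of \<phi>] that by (auto simp: dist_real_def)
      then show ?thesis by simp
    qed
    then show ?thesis using d1(1) d2(1) by (intro exI[of _ "min d1 d2"]) auto
  qed
  then obtain d where d: "d > 0" "\<And>\<phi>. dist \<phi> \<theta> < d \<Longrightarrow> a \<theta> + Im (Ln (w \<phi>)) = a \<phi>"
    by blast
  show ?thesis
    by (rule has_field_derivative_transform_within[OF D d(1) UNIV_I]) (rule d(2))
qed

theorem mainTheorem12:
  fixes A C1 C2 C3 C4 :: real
    and c :: "real \<Rightarrow> real \<Rightarrow> complex"
    and \<alpha> :: "real \<Rightarrow> real \<Rightarrow> real"
  assumes A: "A \<ge> 0"
    and smooth: "smooth_strip c"
    and periodic: "\<forall>t\<in>{0<..1}. \<forall>\<theta>. c t (\<theta> + 2*pi) = c t \<theta>"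
    and immersion: "\<forall>t\<in>{0<..1}. \<forall>\<theta>. Dth c t \<theta> \<noteq> 0"
    and lift_cont: "continuous_on ({0<..1} \<times> UNIV) (\<lambda>(t,\<theta>). \<alpha> t \<theta>)"
    and lift: "\<forall>t\<in>{0<..1}. \<forall>\<theta>.
                 Dth c t \<theta> = complex_of_real (norm (Dth c t \<theta>)) * cis (\<alpha> t \<theta>)"
    and h1: "\<forall>t\<in>{0<..1}. curve_length c t \<le> C1"
    and h2: "\<forall>t\<in>{0<..1}. \<forall>\<theta>. norm (Dt c t \<theta>) \<le> C2"
    and h3: "\<forall>t\<in>{0<..1}. integral {0..2*pi} (\<lambda>\<theta>. \<bar>deriv (\<lambda>\<phi>. \<alpha> t \<phi>) \<theta>\<bar>) \<le> C3"
    and h4: "\<forall>t\<in>{0<..1}. \<forall>\<theta>. \<bar>curvature c t \<theta>\<bar> \<le> C4 / t"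
  shows "(\<lambda>t. sqrt (integral {0..2*pi} (\<lambda>\<theta>. (1 + A * (curvature c t \<theta>)\<^sup>2)
                    * (Dt c t \<theta> \<bullet> unit_normal c t \<theta>)\<^sup>2 * norm (Dth c t \<theta>))))
            integrable_on {0..1}
       \<and> integral {0..1} (\<lambda>t. sqrt (integral {0..2*pi} (\<lambda>\<theta>. (1 + A * (curvature c t \<theta>)\<^sup>2)
                    * (Dt c t \<theta> \<bullet> unit_normal c t \<theta>)\<^sup>2 * norm (Dth c t \<theta>))))
         \<le> C2 * (sqrt C1 + 2 * sqrt (A * C3 * C4))"
proof -
  define T where "T = {0<..1::real}"
  have tdomT: "tdom = T" by (simp add: tdom_def T_def)
  define F where "F = (\<lambda>t \<theta>. (1 + A * (curvature c t \<theta>)\<^sup>2)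
                    * (Dt c t \<theta> \<bullet> unit_normal c t \<theta>)\<^sup>2 * norm (Dth c t \<theta>))"
  define I where "I = (\<lambda>t. integral {0..2*pi} (F t))"
  have pd: "Dth c \<in> pderivs c" "Dt c \<in> pderivs c" "Dth (Dth c) \<in> pderivs c"
    by (intro pderivs.intros)+
  have contg: "continuous_on (T \<times> UNIV) (\<lambda>p. g (fst p) (snd p))" if "g \<in> pderivs c" for g
    using smooth that unfolding smooth_strip_def tdomT by (auto simp: case_prod_beta)
  have dth2: "((\<lambda>\<phi>. Dth c t \<phi>) has_vector_derivative Dth (Dth c) t \<theta>) (at \<theta>)" if "t \<in> T" for t \<theta>
    using smooth pd(1) that unfolding smooth_strip_def tdomT by blast
  have nz: "Dth c t \<theta> \<noteq> 0" if "t \<in> T" for t \<theta> using immersion that by (auto simp: T_def)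
  have one: "1 \<in> T" by (simp add: T_def)
  have C2: "C2 \<ge> 0" using h2 one norm_ge_zero order_trans unfolding T_def by blast
  have C4: "C4 \<ge> 0" using h4 one unfolding T_def by (metis abs_ge_zero div_by_1 order_trans)
  have contF: "continuous_on (T \<times> UNIV) (\<lambda>p. F (fst p) (snd p))"
  proof -
    note c1 = contg[OF pd(1)] and c2 = contg[OF pd(2)] and c3 = contg[OF pd(3)]
    have nz': "\<forall>p\<in>T \<times> UNIV. Dth c (fst p) (snd p) \<noteq> 0" using nz by auto
    show ?thesis unfolding F_def curvature_def unit_normal_def
      by (intro continuous_intros c1 c2 c3) (use nz' in auto)
  qed
  have contI: "continuous_on T I"
  proof -
    have "continuous_on (T \<times> cbox 0 (2*pi)) (\<lambda>(t, \<theta>). F t \<theta>)"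
      using continuous_on_subset[OF contF, of "T \<times> cbox 0 (2*pi)"] by (auto simp: case_prod_beta)
    from integral_continuous_on_param[OF this] show ?thesis by (simp add: I_def)
  qed
  have slice: "continuous_on {0..2*pi} (G t)"
    if "continuous_on (T \<times> UNIV) (\<lambda>p. G (fst p) (snd p))" "t \<in> T" for G :: "real \<Rightarrow> real \<Rightarrow> real" and t
  proof -
    have "continuous_on {0..2*pi} (\<lambda>\<theta>::real. (t,\<theta>))" by (intro continuous_intros)
    moreover have "(\<lambda>\<theta>. (t,\<theta>)) ` {0..2*pi} \<subseteq> T \<times> UNIV" using that(2) by auto
    ultimately show ?thesis using continuous_on_compose2[OF that(1), of "{0..2*pi}" "\<lambda>\<theta>. (t,\<theta>)"] by simp
  qed
  have Fint: "F t integrable_on {0..2*pi}" if "t \<in> T" for t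
    by (rule integrable_continuous_interval[OF slice[OF contF that]])
  have Fnn: "F t \<theta> \<ge> 0" if "t \<in> T" for t \<theta>
    unfolding F_def using A by (simp add: zero_le_mult_iff)
  have contK: "continuous_on (T \<times> UNIV) (\<lambda>p. curvature c (fst p) (snd p))"
  proof -
    note c1 = contg[OF pd(1)] and c3 = contg[OF pd(3)]
    have nz': "\<forall>p\<in>T \<times> UNIV. Dth c (fst p) (snd p) \<noteq> 0" using nz by auto
    show ?thesis unfolding curvature_def
      by (intro continuous_intros c1 c3) (use nz' in auto)
  qed
  have contN: "continuous_on (T \<times> UNIV) (\<lambda>p. norm (Dth c (fst p) (snd p)))"
    by (intro continuous_intros contg[OF pd(1)])
  have contKN: "continuous_on (T \<times> UNIV) (\<lambda>p. \<bar>curvature c (fst p) (snd p)\<bar> * norm (Dth c (fst p) (snd p)))"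
    by (intro continuous_intros contK contN)
  have Nint: "(\<lambda>\<theta>. norm (Dth c t \<theta>)) integrable_on {0..2*pi}" if "t \<in> T" for t
    using integrable_continuous_interval[OF slice[OF contN that]] by simp
  have KNint: "(\<lambda>\<theta>. \<bar>curvature c t \<theta>\<bar> * norm (Dth c t \<theta>)) integrable_on {0..2*pi}" if "t \<in> T" for t
    using integrable_continuous_interval[OF slice[OF contKN that]] by simp
  have dalpha: "deriv (\<lambda>\<phi>. \<alpha> t \<phi>) \<theta> = curvature c t \<theta> * norm (Dth c t \<theta>)" if t: "t \<in> T" for t \<theta>
  proof -
    have "continuous_on UNIV (\<lambda>\<phi>::real. (t,\<phi>))" by (intro continuous_intros)
    moreover have "(\<lambda>\<phi>. (t,\<phi>)) ` UNIV \<subseteq> {0<..1} \<times> UNIV" using t by (auto simp: T_def)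
    ultimately have "continuous_on UNIV (\<lambda>\<phi>. \<alpha> t \<phi>)"
      using continuous_on_compose2[OF lift_cont, of UNIV "\<lambda>\<phi>. (t,\<phi>)"] by simp
    then have ca: "isCont (\<lambda>\<phi>. \<alpha> t \<phi>) \<theta>" by (simp add: continuous_on_eq_continuous_at)
    have pol: "\<And>\<phi>. Dth c t \<phi> = of_real (norm (Dth c t \<phi>)) * cis (\<alpha> t \<phi>)"
      using lift t by (auto simp: T_def)
    have "((\<lambda>\<phi>. \<alpha> t \<phi>) has_real_derivative Im (Dth (Dth c) t \<theta> / Dth c t \<theta>)) (at \<theta>)"
      by (rule lift_deriv[OF dth2[OF t] nz[OF t] ca pol])
    then have "deriv (\<lambda>\<phi>. \<alpha> t \<phi>) \<theta> = Im (Dth (Dth c) t \<theta> / Dth c t \<theta>)"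
      by (rule DERIV_imp_deriv)
    also have "\<dots> = curvature c t \<theta> * norm (Dth c t \<theta>)"
      using nz[OF t, of \<theta>] unfolding curvature_def Im_divide'
      by (simp add: field_simps power2_eq_square power3_eq_cube)
    finally show ?thesis .
  qed
  have Lnn: "curve_length c t \<ge> 0" if "t \<in> T" for t
    unfolding curve_length_def using Nint[OF that] by (simp add: integral_nonneg)
  have Jeq: "integral {0..2*pi} (\<lambda>\<theta>. \<bar>deriv (\<lambda>\<phi>. \<alpha> t \<phi>) \<theta>\<bar>)
      = integral {0..2*pi} (\<lambda>\<theta>. \<bar>curvature c t \<theta>\<bar> * norm (Dth c t \<theta>))" if "t \<in> T" for t
    by (rule integral_cong) (simp add: dalpha[OF that] abs_mult)
  have Jnn: "integral {0..2*pi} (\<lambda>\<theta>. \<bar>curvature c t \<theta>\<bar> * norm (Dth c t \<theta>)) \<ge> 0" if "t \<in> T" for t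
    using KNint[OF that] by (simp add: integral_nonneg)
  have C1: "C1 \<ge> 0"
  proof -
    have "curve_length c 1 \<le> C1" using h1 by simp
    then show ?thesis using Lnn[OF one] by linarith
  qed
  have C3: "C3 \<ge> 0"
  proof -
    have "integral {0..2*pi} (\<lambda>\<theta>. \<bar>deriv (\<lambda>\<phi>. \<alpha> 1 \<phi>) \<theta>\<bar>) \<le> C3" using h3 by simp
    then show ?thesis using Jnn[OF one] Jeq[OF one] by linarith
  qed
  have Inn: "I t \<ge> 0" if "t \<in> T" for t
    unfolding I_def using Fint[OF that] Fnn[OF that] by (simp add: integral_nonneg)
  have Ibound: "I t \<le> C2\<^sup>2 * C1 + (A * C3 * C4) * C2\<^sup>2 / t" if t: "t \<in> T" for t
  proof -
    have tpos: "t > 0" using t by (simp add: T_def)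
    have Fle: "F t \<theta> \<le> C2\<^sup>2 * norm (Dth c t \<theta>) + (A * C4 / t * C2\<^sup>2) * (\<bar>curvature c t \<theta>\<bar> * norm (Dth c t \<theta>))" for \<theta>
    proof -
      define X where "X = (Dt c t \<theta> \<bullet> unit_normal c t \<theta>)\<^sup>2"
      define N where "N = norm (Dth c t \<theta>)"
      define k where "k = curvature c t \<theta>"
      have nn: "norm (unit_normal c t \<theta>) = 1"
        using nz[OF t, of \<theta>] by (simp add: unit_normal_def norm_divide norm_mult)
      have "\<bar>Dt c t \<theta> \<bullet> unit_normal c t \<theta>\<bar> \<le> norm (Dt c t \<theta>) * norm (unit_normal c t \<theta>)"
        by (rule Cauchy_Schwarz_ineq2)
      also have "\<dots> \<le> C2" using h2 t nn by (simp add: T_def)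
      finally have "\<bar>Dt c t \<theta> \<bullet> unit_normal c t \<theta>\<bar> \<le> C2" .
      then have X: "X \<le> C2\<^sup>2" "X \<ge> 0" unfolding X_def
        by (metis abs_ge_zero power2_abs power_mono) simp
      have kb: "\<bar>k\<bar> \<le> C4 / t" using h4 t by (simp add: T_def k_def)
      have "k\<^sup>2 \<le> C4 / t * \<bar>k\<bar>"
        using mult_right_mono[OF kb abs_ge_zero[of k]] by (simp add: power2_eq_square abs_mult_self_eq)
      then have k2: "1 + A * k\<^sup>2 \<le> 1 + A * (C4 / t) * \<bar>k\<bar>"
        using A mult_left_mono by (fastforce simp: mult.assoc)
      have N: "N \<ge> 0" by (simp add: N_def)
      have "F t \<theta> = (1 + A * k\<^sup>2) * (X * N)" by (simp add: F_def X_def N_def k_def mult.assoc)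
      also have "\<dots> \<le> (1 + A * (C4 / t) * \<bar>k\<bar>) * (C2\<^sup>2 * N)"
        by (rule mult_mono[OF k2 mult_right_mono[OF X(1) N]]) (use X N A C4 tpos in auto)
      also have "\<dots> = C2\<^sup>2 * N + (A * C4 / t * C2\<^sup>2) * (\<bar>k\<bar> * N)" by (simp add: algebra_simps)
      finally show ?thesis by (simp add: N_def k_def)
    qed
    define B where "B = A * C4 / t * C2\<^sup>2"
    have Bnn: "B \<ge> 0" using A C4 tpos by (simp add: B_def)
    have ia: "(\<lambda>\<theta>. C2\<^sup>2 * norm (Dth c t \<theta>)) integrable_on {0..2*pi}"
      by (rule integrable_on_mult_right[OF Nint[OF t]])
    have ib: "(\<lambda>\<theta>. B * (\<bar>curvature c t \<theta>\<bar> * norm (Dth c t \<theta>))) integrable_on {0..2*pi}"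
      by (rule integrable_on_mult_right[OF KNint[OF t]])
    have "I t \<le> integral {0..2*pi} (\<lambda>\<theta>. C2\<^sup>2 * norm (Dth c t \<theta>) + B * (\<bar>curvature c t \<theta>\<bar> * norm (Dth c t \<theta>)))"
      unfolding I_def by (rule integral_le[OF Fint[OF t] integrable_add[OF ia ib]]) (unfold B_def, rule Fle)
    also have "\<dots> = C2\<^sup>2 * curve_length c t + B * integral {0..2*pi} (\<lambda>\<theta>. \<bar>deriv (\<lambda>\<phi>. \<alpha> t \<phi>) \<theta>\<bar>)"
      unfolding curve_length_def Jeq[OF t] integral_add[OF ia ib] integral_mult_right ..
    also have "\<dots> \<le> C2\<^sup>2 * C1 + B * C3"
    proof (rule add_mono)
      show "C2\<^sup>2 * curve_length c t \<le> C2\<^sup>2 * C1" using h1 t by (intro mult_left_mono) (auto simp: T_def)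
      show "B * integral {0..2*pi} (\<lambda>\<theta>. \<bar>deriv (\<lambda>\<phi>. \<alpha> t \<phi>) \<theta>\<bar>) \<le> B * C3"
        using h3 t Bnn by (intro mult_left_mono) (auto simp: T_def)
    qed
    also have "\<dots> = C2\<^sup>2 * C1 + (A * C3 * C4) * C2\<^sup>2 / t" by (simp add: B_def)
    finally show ?thesis .
  qed
  define K where "K = C2 * sqrt (A * C3 * C4)"
  define g where "g = (\<lambda>t::real. C2 * sqrt C1 + K * t powr (-1/2))"
  have hg: "sqrt (I t) \<le> g t" if t: "t \<in> T" for t
  proof -
    have tpos: "t > 0" using t by (simp add: T_def)
    have nn: "0 \<le> A * C3 * C4 * C2\<^sup>2 / t" using A C3 C4 tpos by simp
    have "sqrt (I t) \<le> sqrt (C2\<^sup>2 * C1 + (A * C3 * C4) * C2\<^sup>2 / t)"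
      using Ibound[OF t] by simp
    also have "\<dots> \<le> sqrt (C2\<^sup>2 * C1) + sqrt ((A * C3 * C4) * C2\<^sup>2 / t)"
      by (rule sqrt_add_le_add_sqrt) (use C1 nn in auto)
    also have "sqrt (C2\<^sup>2 * C1) = C2 * sqrt C1" using C2 by (simp add: real_sqrt_mult)
    also have "sqrt ((A * C3 * C4) * C2\<^sup>2 / t) = K * t powr (-1/2)"
      using C2 tpos by (simp add: K_def real_sqrt_mult real_sqrt_divide powr_minus_divide powr_half_sqrt)
    finally show ?thesis by (simp add: g_def)
  qed
  have gint: "(g has_integral (C2 * sqrt C1 + 2 * K)) {0..1}"
  proof -
    have "((\<lambda>x. x powr (-1/2)) has_integral (1 powr (-1/2+1) / (-1/2+1))) {0..1::real}"
      by (rule has_integral_powr_from_0) auto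
    then have p: "((\<lambda>x. x powr (-1/2)) has_integral 2) {0..1::real}" by simp
    have c: "((\<lambda>x. C2 * sqrt C1) has_integral (C2 * sqrt C1)) {0..1::real}"
      using has_integral_const_real[of "C2 * sqrt C1" 0 1] by simp
    have "((\<lambda>x. C2 * sqrt C1 + K * x powr (-1/2)) has_integral (C2 * sqrt C1 + K * 2)) {0..1}"
      by (rule has_integral_add[OF c has_integral_mult_right[OF p]])
    then show ?thesis by (simp add: g_def mult.commute)
  qed
  have neg1: "negligible {x \<in> {0..1} - T. P x}" for P :: "real \<Rightarrow> bool"
    by (rule negligible_subset[of "{0}"]) (auto simp: T_def)
  have neg2: "negligible {x \<in> T - {0..1}. P x}" for P :: "real \<Rightarrow> bool"
    by (rule negligible_subset[of "{}"]) (auto simp: T_def)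
  have gintT: "(g has_integral (C2 * sqrt C1 + 2 * K)) T"
    using has_integral_spike_set_eq[OF neg1 neg2] gint by blast
  have hint: "(\<lambda>t. sqrt (I t)) integrable_on T"
  proof (rule measurable_bounded_by_integrable_imp_integrable)
    show "T \<in> sets lebesgue" by (simp add: T_def)
    show "(\<lambda>t. sqrt (I t)) \<in> borel_measurable (lebesgue_on T)"
      by (rule continuous_imp_measurable_on_sets_lebesgue) (intro continuous_intros contI, simp add: T_def)
    show "g integrable_on T" using gintT by blast
    show "norm (sqrt (I t)) \<le> g t" if "t \<in> T" for t using hg[OF that] Inn[OF that] by simp
  qed
  have "integral T (\<lambda>t. sqrt (I t)) \<le> C2 * sqrt C1 + 2 * K"
    using integral_le[OF hint has_integral_integrable[OF gintT] hg] gintT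
    by (simp add: integral_unique)
  moreover have "(\<lambda>t. sqrt (I t)) integrable_on {0..1}"
    by (rule integrable_spike_set[OF hint neg2 neg1])
  moreover have "integral {0..1} (\<lambda>t. sqrt (I t)) = integral T (\<lambda>t. sqrt (I t))"
    by (rule integral_spike_set[OF neg1 neg2])
  ultimately show ?thesis
    unfolding I_def F_def K_def by (simp add: algebra_simps)
qed
end
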